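(* Let $f\in\mathbb{Z}_2[x]$, $n\ge2$, and let $\sigma$ be a cycle of $f_n$. If $\sigma$ strongly grows, then its (unique) lift strongly grows. If $\sigma$ weakly grows, then its lift strongly splits.
   Context: $f_n$ is the induced map on $\mathbb{Z}/2^n\mathbb{Z}$, $f_n(x\bmod 2^n)=f(x)\bmod 2^n$. A $k$-cycle of $f_n$ is a tuple $\sigma=(x_1,\dots,x_k)$ of distinct elements with $f_n(x_i)=x_{i+1}$, $f_n(x_k)=x_1$; its lifts are the cycles of $f_{n+1}$ in $\{y\in\mathbb{Z}/2^{n+1}\mathbb{Z}:y\bmod 2^n\in\sigma\}$. For $x\in\mathbb{Z}_2$ set $a_n(x)=(f^k)'(x)$ and $b_n(x)=(f^k(x)-x)/2^n$, evaluated at a representative $x\in\mathbb{Z}_2$ of a point of $\sigma$ (for lifts at level $n+1$ of length $k'$ use $a_{n+1}(x)=(f^{k'})'(x)$, $b_{n+1}(x)=(f^{k'}(x)-x)/2^{n+1}$). $\sigma$ strongly grows if $a_n\equiv1\pmod4$ and $b_n\equiv1\pmod2$; weakly grows if $a_n\equiv3\pmod4$ and $b_n\equiv1\pmod2$; strongly splits if $a_n\equiv1\pmod4$ and $b_n\equiv0\pmod2$; weakly splits if $a_n\equiv3\pmod4$ and $b_n\equiv0\pmod2$ (these conditions do not depend on the chosen representative). *)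

theory Defs
  imports "HOL-Computational_Algebra.Polynomial"
begin

text \<open>A 2-adic integer is represented by a sequence of integers x m that is
compatible (x (m+1) = x m mod 2^m); two sequences are identified when they agree
mod 2^m for every m.  This is the inverse limit of the rings Z/2^m Z.\<close>

definition z2_compat :: "(nat \<Rightarrow> int) \<Rightarrow> bool" where
  "z2_compat x \<longleftrightarrow> (\<forall>m. x (Suc m) mod 2 ^ m = x m mod 2 ^ m)"

definition z2_rel :: "(nat \<Rightarrow> int) \<Rightarrow> (nat \<Rightarrow> int) \<Rightarrow> bool" where
  "z2_rel x y \<longleftrightarrow> z2_compat x \<and> z2_compat y \<and> (\<forall>m. x m mod 2 ^ m = y m mod 2 ^ m)"

lemma z2_compat_const: "z2_compat (\<lambda>_. c)"
  by (simp add: z2_compat_def)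

lemma z2_compat_add: "z2_compat x \<Longrightarrow> z2_compat y \<Longrightarrow> z2_compat (\<lambda>m. x m + y m)"
  unfolding z2_compat_def by (metis mod_add_cong)

lemma z2_compat_mult: "z2_compat x \<Longrightarrow> z2_compat y \<Longrightarrow> z2_compat (\<lambda>m. x m * y m)"
  unfolding z2_compat_def by (metis mod_mult_cong)

lemma z2_compat_uminus: "z2_compat x \<Longrightarrow> z2_compat (\<lambda>m. - x m)"
  unfolding z2_compat_def by (metis mod_minus_cong)

lemma z2_compat_diff: "z2_compat x \<Longrightarrow> z2_compat y \<Longrightarrow> z2_compat (\<lambda>m. x m - y m)"
  unfolding z2_compat_def by (metis mod_diff_cong)

lemma z2_rel_refl: "z2_compat x \<Longrightarrow> (\<And>m. x m = y m) \<Longrightarrow> z2_rel x y"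
  unfolding z2_rel_def
proof -
  assume a: "z2_compat x" and b: "\<And>m. x m = y m"
  have "y = x" using b by auto
  then show "z2_compat x \<and> z2_compat y \<and> (\<forall>m. x m mod 2 ^ m = y m mod 2 ^ m)"
    using a by simp
qed

lemma z2_part_equivp: "part_equivp z2_rel"
proof (rule part_equivpI)
  show "\<exists>x. z2_rel x x" by (rule exI[of _ "\<lambda>_. 0"]) (simp add: z2_rel_def z2_compat_def)
  show "symp z2_rel" by (rule sympI) (auto simp: z2_rel_def)
  show "transp z2_rel" by (rule transpI) (auto simp: z2_rel_def)
qed

quotient_type z2 = "nat \<Rightarrow> int" / partial: z2_rel
  by (rule z2_part_equivp)

instantiation z2 :: comm_ring_1
begin

lift_definition zero_z2 :: z2 is "\<lambda>_. 0" by (simp add: z2_rel_def z2_compat_def)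
lift_definition one_z2 :: z2 is "\<lambda>_. 1" by (simp add: z2_rel_def z2_compat_def)
lift_definition plus_z2 :: "z2 \<Rightarrow> z2 \<Rightarrow> z2" is "\<lambda>x y m. x m + y m"
  unfolding z2_rel_def by (auto intro: z2_compat_add mod_add_cong)
lift_definition times_z2 :: "z2 \<Rightarrow> z2 \<Rightarrow> z2" is "\<lambda>x y m. x m * y m"
  unfolding z2_rel_def by (auto intro: z2_compat_mult mod_mult_cong)
lift_definition uminus_z2 :: "z2 \<Rightarrow> z2" is "\<lambda>x m. - x m"
  unfolding z2_rel_def by (auto intro: z2_compat_uminus mod_minus_cong)
lift_definition minus_z2 :: "z2 \<Rightarrow> z2 \<Rightarrow> z2" is "\<lambda>x y m. x m - y m"
  unfolding z2_rel_def by (auto intro: z2_compat_diff mod_diff_cong)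

lemma z2_rel_same: "z2_compat x \<Longrightarrow> z2_rel x x"
  by (simp add: z2_rel_def)

instance
proof
  fix a b c :: z2
  show "a + b + c = a + (b + c)"
    by transfer (rule z2_rel_refl, intro z2_compat_add, auto simp: z2_rel_def)
  show "a + b = b + a"
    by transfer (rule z2_rel_refl, intro z2_compat_add, auto simp: z2_rel_def)
  show "0 + a = a"
    by transfer (rule z2_rel_refl, intro z2_compat_add z2_compat_const, auto simp: z2_rel_def)
  show "- a + a = 0"
    by transfer (rule z2_rel_refl, intro z2_compat_add z2_compat_uminus, auto simp: z2_rel_def)
  show "a - b = a + - b"
    by transfer (rule z2_rel_refl, intro z2_compat_diff, auto simp: z2_rel_def)
  show "a * b * c = a * (b * c)"
    by transfer (rule z2_rel_refl, intro z2_compat_mult, auto simp: z2_rel_def)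
  show "a * b = b * a"
    by transfer (rule z2_rel_refl, intro z2_compat_mult, auto simp: z2_rel_def)
  show "1 * a = a"
    by transfer (rule z2_rel_refl, intro z2_compat_mult z2_compat_const, auto simp: z2_rel_def)
  show "(a + b) * c = a * c + b * c"
    by transfer (rule z2_rel_refl, intro z2_compat_mult z2_compat_add, auto simp: z2_rel_def algebra_simps)
  show "(0::z2) \<noteq> 1"
    by transfer (auto simp: z2_rel_def dest: spec[of _ 1])
qed

end

text \<open>Reduction Z_2 \<rightarrow> Z/2^n Z; residues mod 2^n are represented by the integers 0..<2^n.\<close>

lift_definition red :: "nat \<Rightarrow> z2 \<Rightarrow> int" is "\<lambda>n x. x n mod 2 ^ n"
  by (simp add: z2_rel_def)

definition fn_map :: "z2 poly \<Rightarrow> nat \<Rightarrow> int \<Rightarrow> int" where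
  "fn_map f n r = red n (poly f (of_int r))"

definition is_cycle :: "z2 poly \<Rightarrow> nat \<Rightarrow> int list \<Rightarrow> bool" where
  "is_cycle f n \<sigma> \<longleftrightarrow> \<sigma> \<noteq> [] \<and> distinct \<sigma> \<and> set \<sigma> \<subseteq> {0..<2 ^ n} \<and>
     (\<forall>i < length \<sigma>. fn_map f n (\<sigma> ! i) = \<sigma> ! ((i + 1) mod length \<sigma>))"

definition is_lift :: "z2 poly \<Rightarrow> nat \<Rightarrow> int list \<Rightarrow> int list \<Rightarrow> bool" where
  "is_lift f n \<sigma> \<tau> \<longleftrightarrow> is_cycle f (Suc n) \<tau> \<and> (\<forall>y \<in> set \<tau>. y mod 2 ^ n \<in> set \<sigma>)"

definition iter_poly :: "z2 poly \<Rightarrow> nat \<Rightarrow> z2 poly" where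
  "iter_poly f k = ((\<lambda>g. pcompose f g) ^^ k) [:0, 1:]"

definition deriv_at :: "z2 poly \<Rightarrow> z2 \<Rightarrow> z2" where
  "deriv_at p x = (\<Sum>i = 1..degree p. of_nat i * coeff p i * x ^ (i - 1))"

definition a_val :: "z2 poly \<Rightarrow> nat \<Rightarrow> z2 \<Rightarrow> z2" where
  "a_val f k x = deriv_at (iter_poly f k) x"

definition b_val :: "z2 poly \<Rightarrow> nat \<Rightarrow> nat \<Rightarrow> z2 \<Rightarrow> z2" where
  "b_val f n k x = (THE y. 2 ^ n * y = poly (iter_poly f k) x - x)"

definition strongly_grows :: "z2 poly \<Rightarrow> nat \<Rightarrow> int list \<Rightarrow> bool" where
  "strongly_grows f n \<sigma> \<longleftrightarrow> (\<forall>x. red n x \<in> set \<sigma> \<longrightarrow>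
     (4::z2) dvd a_val f (length \<sigma>) x - 1 \<and> \<not> (2::z2) dvd b_val f n (length \<sigma>) x)"

definition weakly_grows :: "z2 poly \<Rightarrow> nat \<Rightarrow> int list \<Rightarrow> bool" where
  "weakly_grows f n \<sigma> \<longleftrightarrow> (\<forall>x. red n x \<in> set \<sigma> \<longrightarrow>
     (4::z2) dvd a_val f (length \<sigma>) x - 3 \<and> \<not> (2::z2) dvd b_val f n (length \<sigma>) x)"

definition strongly_splits :: "z2 poly \<Rightarrow> nat \<Rightarrow> int list \<Rightarrow> bool" where
  "strongly_splits f n \<sigma> \<longleftrightarrow> (\<forall>x. red n x \<in> set \<sigma> \<longrightarrow>
     (4::z2) dvd a_val f (length \<sigma>) x - 1 \<and> (2::z2) dvd b_val f n (length \<sigma>) x)"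

definition weakly_splits :: "z2 poly \<Rightarrow> nat \<Rightarrow> int list \<Rightarrow> bool" where
  "weakly_splits f n \<sigma> \<longleftrightarrow> (\<forall>x. red n x \<in> set \<sigma> \<longrightarrow>
     (4::z2) dvd a_val f (length \<sigma>) x - 3 \<and> (2::z2) dvd b_val f n (length \<sigma>) x)"

end

theory Submission
  imports Defs
begin

lemma compat_mod_le: "z2_compat x \<Longrightarrow> m \<le> n \<Longrightarrow> x n mod 2^m = x m mod 2^m"
proof (induction n)
  case 0 then show ?case by simp
next
  case (Suc n)
  show ?case
  proof (cases "m = Suc n")
    case True then show ?thesis by simp
  next
    case False
    then have "m \<le> n" using Suc.prems by simp
    have d: "(2::int)^m dvd 2^n" using \<open>m \<le> n\<close> by (simp add: le_imp_power_dvd)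
    have "x (Suc n) mod 2^m = (x (Suc n) mod 2^n) mod 2^m" using d by (simp add: mod_mod_cancel)
    also have "\<dots> = (x n mod 2^n) mod 2^m" using Suc.prems(1) by (simp add: z2_compat_def)
    also have "\<dots> = x n mod 2^m" using d by (simp add: mod_mod_cancel)
    finally show ?thesis using Suc.IH Suc.prems \<open>m \<le> n\<close> by simp
  qed
qed

lift_definition cz :: "int \<Rightarrow> z2" is "\<lambda>c _. c" by (simp add: z2_rel_def z2_compat_def)

lemma cz_add: "cz (a + b) = cz a + cz b"
  by transfer (simp add: z2_rel_def z2_compat_def)
lemma cz_one: "cz 1 = 1"
  by transfer (simp add: z2_rel_def z2_compat_def)
lemma cz_zero: "cz 0 = 0"
  by transfer (simp add: z2_rel_def z2_compat_def)
lemma cz_minus: "cz (a - b) = cz a - cz b"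
  by transfer (simp add: z2_rel_def z2_compat_def)

lemma of_int_cz: "of_int c = cz c"
proof (induction c rule: int_induct[where k=0])
  case base then show ?case by (simp add: cz_zero)
next
  case (step1 i) then show ?case by (simp add: cz_add cz_one)
next
  case (step2 i) then show ?case by (simp add: cz_minus cz_one)
qed

lemma red_cz: "red n (cz c) = c mod 2^n"
  by transfer simp
lemma red_add: "red n (x + y) = (red n x + red n y) mod 2^n"
  by transfer (simp add: mod_add_eq)
lemma red_mult: "red n (x * y) = (red n x * red n y) mod 2^n"
  by transfer (simp add: mod_mult_eq)
lemma red_diff: "red n (x - y) = (red n x - red n y) mod 2^n"
  by transfer (simp add: mod_diff_eq)
lemma red_range: "0 \<le> red n x \<and> red n x < 2^n"
  by transfer simp
lemma red_le: "m \<le> n \<Longrightarrow> red n x mod 2^m = red m x"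
proof transfer
  fix m n :: nat and x :: "nat \<Rightarrow> int"
  assume "m \<le> n" "z2_rel x x"
  then have c: "z2_compat x" by (simp add: z2_rel_def)
  have d: "(2::int)^m dvd 2^n" using \<open>m \<le> n\<close> by (simp add: le_imp_power_dvd)
  have "x n mod 2 ^ n mod 2 ^ m = x n mod 2^m" using d by (simp add: mod_mod_cancel)
  also have "\<dots> = x m mod 2^m" using compat_mod_le[OF c \<open>m \<le> n\<close>] .
  finally show "x n mod 2 ^ n mod 2 ^ m = x m mod 2 ^ m" .
qed

lift_definition dpow :: "nat \<Rightarrow> z2 \<Rightarrow> z2" is "\<lambda>n x m. x (m + n) div 2^n"
proof -
  fix n :: nat and x y :: "nat \<Rightarrow> int"
  assume r: "z2_rel x y"
  have key: "a mod 2^(m+n) = b mod 2^(m+n) \<Longrightarrow> (a div 2^n) mod 2^m = (b div 2^n) mod 2^m" for a b :: int and m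
    by (simp add: div_exp_mod_exp_eq add.commute)
  have cx: "z2_compat x" and cy: "z2_compat y" using r by (auto simp: z2_rel_def)
  have comp: "z2_compat (\<lambda>m. z (m + n) div 2^n)" if cz: "z2_compat z" for z
    unfolding z2_compat_def
  proof
    fix m
    have "z (Suc m + n) mod 2^(m+n) = z (m + n) mod 2^(m+n)"
      using compat_mod_le[OF cz, of "m+n" "Suc m + n"] by simp
    then show "z (Suc m + n) div 2 ^ n mod 2 ^ m = z (m + n) div 2 ^ n mod 2 ^ m" by (rule key)
  qed
  show "z2_rel (\<lambda>m. x (m + n) div 2 ^ n) (\<lambda>m. y (m + n) div 2 ^ n)"
    unfolding z2_rel_def
  proof (intro conjI allI comp cx cy)
    fix m
    show "x (m + n) div 2 ^ n mod 2 ^ m = y (m + n) div 2 ^ n mod 2 ^ m"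
      using r by (intro key) (simp add: z2_rel_def)
  qed
qed

lemma red0_dvd: "red n x = 0 \<Longrightarrow> x = cz (2^n) * dpow n x"
proof transfer
  fix n :: nat and x :: "nat \<Rightarrow> int"
  assume "z2_rel x x" "x n mod 2^n = 0"
  then have c: "z2_compat x" by (simp add: z2_rel_def)
  have e: "2^n * (x (m + n) div 2^n) = x (m+n)" for m
  proof -
    have "x (m+n) mod 2^n = x n mod 2^n" using compat_mod_le[OF c, of n "m+n"] by simp
    then have "x (m+n) mod 2^n = 0" using \<open>x n mod 2^n = 0\<close> by simp
    then show ?thesis using div_mult_mod_eq[of "x(m+n)" "2^n"] by (simp add: mult.commute)
  qed
  show "z2_rel x (\<lambda>m. 2 ^ n * (x (m + n) div 2 ^ n))"
    unfolding z2_rel_def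
  proof (intro conjI allI c)
    show "z2_compat (\<lambda>m. 2 ^ n * (x (m + n) div 2 ^ n))" unfolding e
      unfolding z2_compat_def
    proof
      fix m
      show "x (Suc m + n) mod 2 ^ m = x (m + n) mod 2 ^ m"
        using compat_mod_le[OF c, of m "Suc m + n"] compat_mod_le[OF c, of m "m+n"] by simp
    qed
    fix m
    show "x m mod 2 ^ m = 2 ^ n * (x (m + n) div 2 ^ n) mod 2 ^ m"
      unfolding e using compat_mod_le[OF c, of m "m+n"] by simp
  qed
qed

lemma cancel_pow: "cz (2^n) * y = cz (2^n) * z \<Longrightarrow> y = z"
proof transfer
  fix n :: nat and y z :: "nat \<Rightarrow> int"
  assume ry: "z2_rel y y" and rz: "z2_rel z z" and h: "z2_rel (\<lambda>m. 2 ^ n * y m) (\<lambda>m. 2 ^ n * z m)"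
  have cy: "z2_compat y" and cz: "z2_compat z" using ry rz by (auto simp: z2_rel_def)
  show "z2_rel y z"
    unfolding z2_rel_def
  proof (intro conjI allI cy cz)
    fix m
    have "2^n * y (m+n) mod 2^(m+n) = 2^n * z (m+n) mod 2^(m+n)" using h by (simp add: z2_rel_def)
    then have e: "2^n * y (m+n) mod 2^(n+m) = 2^n * z (m+n) mod 2^(n+m)" by (simp add: add.commute)
    have "(2^n * y (m+n)) div 2^n mod 2^m = (2^n * z (m+n)) div 2^n mod 2^m"
      unfolding div_exp_mod_exp_eq e ..
    then have "y (m+n) mod 2^m = z (m+n) mod 2^m" by simp
    then show "y m mod 2 ^ m = z m mod 2 ^ m"
      using compat_mod_le[OF cy, of m "m+n"] compat_mod_le[OF cz, of m "m+n"] by simp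
  qed
qed

lemma red_zero_all: "(\<And>m. red m x = 0) \<Longrightarrow> x = 0"
proof transfer
  fix x :: "nat \<Rightarrow> int"
  assume "z2_rel x x" "\<And>m. x m mod 2^m = 0"
  then show "z2_rel x (\<lambda>_. 0)" by (simp add: z2_rel_def z2_compat_def)
qed


lemma pow_cz: "(2::z2)^n = cz (2^n)"
proof -
  have "(2::z2)^n = of_int (2^n)" by simp
  then show ?thesis by (simp add: of_int_cz)
qed

lemma red_of_int: "red n (of_int c) = c mod 2^n"
  by (simp add: of_int_cz red_cz)

lemma red_dvd_iff: "(2::z2)^n dvd x \<longleftrightarrow> red n x = 0"
proof
  assume "(2::z2)^n dvd x"
  then obtain y where "x = 2^n * y" by (auto simp: dvd_def)
  then show "red n x = 0" by (simp add: red_mult pow_cz red_cz)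
next
  assume "red n x = 0"
  then have "x = cz (2^n) * dpow n x" by (rule red0_dvd)
  then show "(2::z2)^n dvd x" by (metis pow_cz dvd_triv_left)
qed

lemma red_eq_iff: "red n x = red n y \<longleftrightarrow> (2::z2)^n dvd (x - y)"
proof -
  have rx: "red n x mod 2^n = red n x" and ry: "red n y mod 2^n = red n y"
    using red_range[of n x] red_range[of n y] by (auto intro: mod_pos_pos_trivial)
  have "red n x = red n y \<longleftrightarrow> red n x mod 2^n = red n y mod 2^n" using rx ry by simp
  also have "\<dots> \<longleftrightarrow> (red n x - red n y) mod 2^n = 0" by (simp add: mod_eq_dvd_iff dvd_eq_mod_eq_0)
  also have "\<dots> \<longleftrightarrow> red n (x - y) = 0" by (simp add: red_diff)
  finally show ?thesis by (simp add: red_dvd_iff)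
qed

lemma cancel2: "(2::z2)^n * y = 2^n * z \<Longrightarrow> y = z"
  by (simp add: pow_cz cancel_pow)

lemma not_two_dvd_one: "\<not> (2::z2) dvd 1"
proof
  assume "(2::z2) dvd 1"
  then have "(2::z2)^1 dvd 1" by simp
  then have "red 1 (1::z2) = 0" by (simp only: red_dvd_iff)
  moreover have "red 1 (1::z2) = 1" using red_of_int[of 1 1] by simp
  ultimately show False by simp
qed

lemma odd_z2: "\<not> (2::z2) dvd b \<Longrightarrow> \<exists>v. b = 1 + 2 * v"
proof -
  assume nb: "\<not> (2::z2) dvd b"
  have r: "0 \<le> red 1 b \<and> red 1 b < 2" using red_range[of 1 b] by simp
  have "red 1 b \<noteq> 0" using nb red_dvd_iff[of 1 b] by simp
  with r have "red 1 b = 1" by simp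
  moreover have "red 1 (1::z2) = 1" using red_of_int[of 1 1] by simp
  ultimately have "red 1 b = red 1 (1::z2)" by simp
  then have "(2::z2)^1 dvd b - 1" by (simp only: red_eq_iff)
  then obtain v where "b - 1 = 2 * v" by (auto simp: dvd_def)
  then show ?thesis by (intro exI[of _ v]) (simp add: algebra_simps)
qed

lemma odd_mult_z2: "\<not> (2::z2) dvd u \<Longrightarrow> \<not> 2 dvd w \<Longrightarrow> \<not> 2 dvd (u * w)"
proof
  assume "\<not> (2::z2) dvd u" "\<not> 2 dvd w" "2 dvd (u * w)"
  then obtain a b where a: "u = 1 + 2 * a" and b: "w = 1 + 2 * b" using odd_z2 by blast
  have "u * w = 1 + 2 * (a + b + 2 * a * b)" unfolding a b by (simp add: algebra_simps)
  with \<open>2 dvd (u * w)\<close> have "(2::z2) dvd 1 + 2 * (a + b + 2 * a * b)" by simp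
  moreover have "(2::z2) dvd 2 * (a + b + 2 * a * b)" by (rule dvd_triv_left)
  ultimately have "(2::z2) dvd 1" using dvd_add_left_iff by blast
  then show False using not_two_dvd_one by simp
qed

lemma z2_val: "(x::z2) \<noteq> 0 \<Longrightarrow> \<exists>v u. x = 2^v * u \<and> \<not> 2 dvd u"
proof -
  assume "x \<noteq> 0"
  then have "\<exists>m. red m x \<noteq> 0" using red_zero_all by blast
  then have ex: "\<exists>m. \<not> (2::z2)^m dvd x" by (simp add: red_dvd_iff)
  define M where "M = (LEAST m. \<not> (2::z2)^m dvd x)"
  have nM: "\<not> (2::z2)^M dvd x" unfolding M_def using LeastI_ex[OF ex] .
  have "M \<noteq> 0"
  proof
    assume "M = 0" then show False using nM by simp
  qed
  then obtain v where v: "M = Suc v" by (cases M) auto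
  have "(2::z2)^v dvd x" using not_less_Least[of v "\<lambda>m. \<not> (2::z2)^m dvd x"] v M_def by auto
  then obtain u where u: "x = 2^v * u" by (auto simp: dvd_def)
  have "\<not> 2 dvd u"
  proof
    assume "2 dvd u"
    then obtain w where "u = 2 * w" by (auto simp: dvd_def)
    then have "x = 2^M * w" using u v by (simp add: algebra_simps)
    then show False using nM by simp
  qed
  with u show ?thesis by blast
qed

instance z2 :: idom
proof
  fix a b :: z2
  assume "a \<noteq> 0" "b \<noteq> 0"
  then obtain v u v' u' where a: "a = 2^v * u" "\<not> 2 dvd u" and b: "b = 2^v' * u'" "\<not> 2 dvd u'"
    using z2_val by meson
  show "a * b \<noteq> 0"
  proof
    assume "a * b = 0"
    then have "(2::z2)^(v+v') * (u * u') = 2^(v+v') * 0" using a b by (simp add: power_add algebra_simps)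
    then have "u * u' = 0" by (rule cancel2)
    then have "(2::z2) dvd u * u'" by simp
    then show False using odd_mult_z2[OF a(2) b(2)] by simp
  qed
qed



lemma poly_diff_dvd: "(x - y) dvd (poly p x - poly p y)" for x y :: "'a::comm_ring_1"
proof (induct p)
  case 0 then show ?case by simp
next
  case (pCons a p)
  then obtain c where c: "poly p x - poly p y = (x - y) * c" by (auto simp: dvd_def)
  have "poly (pCons a p) x - poly (pCons a p) y = x * (poly p x - poly p y) + (x - y) * poly p y"
    by (simp add: algebra_simps)
  also have "\<dots> = (x - y) * (x * c + poly p y)" by (simp add: c algebra_simps)
  finally show ?case by simp
qed

lemma poly_cong: "d dvd (x - y) \<Longrightarrow> d dvd (poly p x - poly p y)" for x y d :: "'a::comm_ring_1"
  using poly_diff_dvd dvd_trans by blast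

lemma taylor: "\<exists>c. poly p (x + h) = poly p x + h * poly (pderiv p) x + h^2 * c" for x h :: "'a::idom"
proof (induct p)
  case 0 then show ?case by simp
next
  case (pCons a q)
  then obtain c where c: "poly q (x + h) = poly q x + h * poly (pderiv q) x + h^2 * c" by blast
  show ?case
  proof (intro exI[of _ "poly (pderiv q) x + (x + h) * c"])
    show "poly (pCons a q) (x + h) = poly (pCons a q) x + h * poly (pderiv (pCons a q)) x +
        h\<^sup>2 * (poly (pderiv q) x + (x + h) * c)"
    proof -
      have "poly (pCons a q) (x + h) = a + (x + h) * (poly q x + h * poly (pderiv q) x + h^2 * c)"
        by (simp only: poly_pCons c)
      also have "\<dots> = poly (pCons a q) x + h * poly (pderiv (pCons a q)) x +
        h\<^sup>2 * (poly (pderiv q) x + (x + h) * c)"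
        by (simp add: pderiv_pCons power2_eq_square algebra_simps)
      finally show ?thesis .
    qed
  qed
qed

lemma poly_sum_bound: "degree q < N \<Longrightarrow> poly q x = (\<Sum>i<N. coeff q i * x^i)"
  for x :: "'a::comm_ring_1"
proof -
  assume d: "degree q < N"
  have "poly q x = (\<Sum>i\<le>degree q. coeff q i * x^i)" by (rule poly_altdef)
  also have "\<dots> = (\<Sum>i<N. coeff q i * x^i)"
    by (rule sum.mono_neutral_left) (use d in \<open>auto simp: coeff_eq_0\<close>)
  finally show ?thesis .
qed

lemma deriv_at_eq: "deriv_at p x = poly (pderiv p) x"
proof (cases "degree p")
  case 0
  have "pderiv p = 0"
  proof (rule poly_eqI)
    fix i show "coeff (pderiv p) i = coeff 0 i" using 0 by (simp add: coeff_pderiv coeff_eq_0)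
  qed
  then show ?thesis using 0 by (simp add: deriv_at_def)
next
  case (Suc d)
  have dg: "degree (pderiv p) \<le> d"
    by (rule degree_le) (use Suc in \<open>auto simp: coeff_pderiv coeff_eq_0\<close>)
  have "poly (pderiv p) x = (\<Sum>i<Suc d. coeff (pderiv p) i * x^i)"
    using dg by (intro poly_sum_bound) simp
  also have "\<dots> = (\<Sum>i=0..d. of_nat (Suc i) * coeff p (Suc i) * x^i)"
    by (simp add: coeff_pderiv atLeast0AtMost lessThan_Suc_atMost)
  also have "\<dots> = (\<Sum>i=Suc 0..Suc d. of_nat i * coeff p i * x^(i - 1))"
    by (subst sum.atLeast_Suc_atMost_Suc_shift) simp
  finally show ?thesis using Suc by (simp add: deriv_at_def)
qed

lemma iter_poly_Suc: "iter_poly f (Suc k) = pcompose f (iter_poly f k)"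
  by (simp add: iter_poly_def)

lemma iter_poly_funpow: "((\<lambda>g. pcompose f g) ^^ a) g = pcompose (iter_poly f a) g"
proof (induct a)
  case 0 then show ?case by (simp add: iter_poly_def pcompose_pCons)
next
  case (Suc a) then show ?case by (simp add: iter_poly_Suc pcompose_assoc)
qed

lemma iter_poly_add: "iter_poly f (a + b) = pcompose (iter_poly f a) (iter_poly f b)"
proof -
  have "iter_poly f (a + b) = ((\<lambda>g. pcompose f g)^^a) (iter_poly f b)"
    by (simp only: iter_poly_def funpow_add comp_def)
  also have "\<dots> = pcompose (iter_poly f a) (iter_poly f b)" by (rule iter_poly_funpow)
  finally show ?thesis .
qed

lemma poly_iter: "poly (iter_poly f k) x = (poly f ^^ k) x"
  by (induct k) (simp_all add: iter_poly_def poly_pcompose)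

lemma red_poly: "red m (poly f y) = fn_map f m (red m y)"
proof -
  have "red m (of_int (red m y)) = red m y"
    using red_range[of m y] by (simp add: red_of_int)
  then have "(2::z2)^m dvd (of_int (red m y) - y)" by (simp add: red_eq_iff)
  then have "(2::z2)^m dvd (poly f (of_int (red m y)) - poly f y)" by (rule poly_cong)
  then have "(2::z2)^m dvd (poly f y - poly f (of_int (red m y)))"
    by (metis dvd_minus_iff minus_diff_eq)
  then show ?thesis unfolding fn_map_def by (simp add: red_eq_iff)
qed

lemma red_funpow: "red m ((poly f ^^ j) y) = (fn_map f m ^^ j) (red m y)"
  by (induct j) (simp_all add: red_poly)



lemma red_of_int_small: "0 \<le> t \<Longrightarrow> t < 2^m \<Longrightarrow> red m (of_int t) = t"
  by (simp add: red_of_int)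

lemma cyc_orbit:
  assumes "is_cycle f n \<sigma>"
  shows "(fn_map f n ^^ j) (\<sigma>!0) = \<sigma>!(j mod length \<sigma>)"
proof (induct j)
  case 0 then show ?case by simp
next
  case (Suc j)
  have k: "length \<sigma> > 0" using assms by (simp add: is_cycle_def)
  have "(fn_map f n ^^ Suc j) (\<sigma>!0) = fn_map f n (\<sigma>!(j mod length \<sigma>))" using Suc by simp
  also have "\<dots> = \<sigma>!((j mod length \<sigma> + 1) mod length \<sigma>)"
    using assms k by (simp add: is_cycle_def)
  also have "(j mod length \<sigma> + 1) mod length \<sigma> = Suc j mod length \<sigma>"
    by (simp add: mod_Suc_eq)
  finally show ?case .
qed

lemma cyc_closed:
  assumes "is_cycle f m \<tau>" "z \<in> set \<tau>"
  shows "fn_map f m z \<in> set \<tau>"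
proof -
  obtain l where l: "l < length \<tau>" "z = \<tau>!l" using assms(2) by (auto simp: in_set_conv_nth)
  then have "fn_map f m z = \<tau>!((l+1) mod length \<tau>)" using assms(1) by (simp add: is_cycle_def)
  moreover have "(l+1) mod length \<tau> < length \<tau>"
  proof -
    have "0 < length \<tau>" using l by linarith
    then show ?thesis by simp
  qed
  ultimately show ?thesis by simp
qed

lemma G_cong:
  assumes "is_cycle f n \<sigma>" "red n x \<in> set \<sigma>"
  shows "(2::z2)^n dvd (poly (iter_poly f (length \<sigma>)) x - x)"
proof -
  let ?k = "length \<sigma>"
  obtain i where i: "i < ?k" "red n x = \<sigma>!i" using assms(2) by (auto simp: in_set_conv_nth)
  have "red n (poly (iter_poly f ?k) x) = (fn_map f n ^^ ?k) (red n x)"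
    by (simp add: poly_iter red_funpow)
  also have "\<dots> = (fn_map f n ^^ ?k) ((fn_map f n ^^ i) (\<sigma>!0))"
    using i cyc_orbit[OF assms(1), of i] by simp
  also have "\<dots> = (fn_map f n ^^ (?k + i)) (\<sigma>!0)" by (simp add: funpow_add)
  also have "\<dots> = \<sigma>!i" using cyc_orbit[OF assms(1), of "?k + i"] i by simp
  finally have "red n (poly (iter_poly f ?k) x) = red n x" using i by simp
  then show ?thesis by (simp only: red_eq_iff)
qed

lemma b_val_eq: "poly (iter_poly f k) x - x = 2^n * b \<Longrightarrow> b_val f n k x = b"
  unfolding b_val_def by (rule the_equality) (auto intro: cancel2)

lemma odd_plus_even: "\<not> (2::z2) dvd u \<Longrightarrow> \<not> 2 dvd (u + 2 * w)"
  using dvd_add_left_iff[of 2 "2*w" u] by simp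

lemma step_calc:
  fixes G :: "z2 poly"
  assumes n: "n \<ge> 2" and hb: "poly G x - x = 2^n * b"
  shows "\<exists>c. poly (pcompose G G) x - x = 2^n * b * (1 + poly (pderiv G) x) + 2^(2*n) * b^2 * c"
    and "4 dvd poly (pderiv G) (poly G x) - poly (pderiv G) x"
proof -
  have gx: "poly G x = x + 2^n * b" using hb by (simp add: algebra_simps)
  obtain c where c: "poly G (x + 2^n*b) = poly G x + (2^n*b) * poly (pderiv G) x + (2^n*b)^2 * c"
    using taylor by blast
  have "poly (pcompose G G) x = poly G (x + 2^n*b)" by (simp add: poly_pcompose gx)
  then have "poly (pcompose G G) x - x = (poly G x - x) + (2^n*b) * poly (pderiv G) x + (2^n*b)^2 * c"
    by (simp add: c)
  also have "\<dots> = 2^n * b * (1 + poly (pderiv G) x) + 2^(2*n) * b^2 * c"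
    by (simp add: hb power_mult_distrib power_mult algebra_simps)
  finally show "\<exists>c. poly (pcompose G G) x - x = 2^n * b * (1 + poly (pderiv G) x) + 2^(2*n) * b^2 * c"
    by blast
  have "(poly G x - x) dvd poly (pderiv G) (poly G x) - poly (pderiv G) x" by (rule poly_diff_dvd)
  moreover have "(4::z2) dvd poly G x - x"
  proof -
    have "(4::z2) dvd 2^n" using n by (metis le_imp_power_dvd power2_eq_square numeral_Bit0 mult_2 one_add_one power_add)
    then show ?thesis using hb by simp
  qed
  ultimately show "4 dvd poly (pderiv G) (poly G x) - poly (pderiv G) x" using dvd_trans by blast
qed



lemma three_vals:
  fixes y a b M :: int
  assumes "M > 0" "0 \<le> y" "y < 2*M" "0 \<le> a" "a < 2*M" "0 \<le> b" "b < 2*M"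
    "y mod M = a mod M" "b mod M = a mod M" "a \<noteq> b"
  shows "y = a \<or> y = b"
proof -
  have r: "z = z mod M \<or> z = z mod M + M" if "0 \<le> z" "z < 2*M" for z
  proof (cases "z < M")
    case True then show ?thesis using that by simp
  next
    case False
    then have "(z - M) mod M = z - M" using that by (intro mod_pos_pos_trivial) auto
    moreover have "(z - M) mod M = z mod M" by simp
    ultimately show ?thesis by simp
  qed
  show ?thesis using r[of y] r[of a] r[of b] assms by auto
qed

lemma mod_eq_shift:
  fixes i j k :: nat
  assumes "i < j" "j < 2*k" "i mod k = j mod k"
  shows "j = i + k"
proof -
  have "k dvd j - i" using assms(1,3) mod_eq_dvd_iff_nat[of i j k] by simp
  then obtain q where q: "j - i = k * q" by (auto simp: dvd_def)
  consider "q = 0" | "q = 1" | "q \<ge> 2" by linarith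
  then show ?thesis
  proof cases
    case 1 then show ?thesis using q assms by simp
  next
    case 2 then show ?thesis using q assms by simp
  next
    case 3
    then have "k * 2 \<le> k * q" by (rule mult_le_mono2)
    then show ?thesis using q assms by linarith
  qed
qed

lemma lift_lemma:
  assumes cyc: "is_cycle f n \<sigma>"
    and H: "\<And>x. red n x \<in> set \<sigma> \<Longrightarrow>
          \<not> (2::z2) dvd b_val f n (length \<sigma>) x \<and> \<not> (2::z2) dvd a_val f (length \<sigma>) x"
    and n: "n \<ge> 2"
  shows "is_lift f n \<sigma> (map (\<lambda>j. (fn_map f (Suc n) ^^ j) (\<sigma>!0)) [0..<2 * length \<sigma>])
    \<and> (\<forall>\<tau>'. is_lift f n \<sigma> \<tau>' \<longrightarrow> set \<tau>' = set (map (\<lambda>j. (fn_map f (Suc n) ^^ j) (\<sigma>!0)) [0..<2 * length \<sigma>]))"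
proof -
  define k where "k = length \<sigma>"
  define p where "p = (\<lambda>j. (fn_map f (Suc n) ^^ j) (\<sigma>!0))"
  define \<tau> where "\<tau> = map p [0..<2*k]"
  define G where "G = iter_poly f k"
  have k0: "k > 0" using cyc by (simp add: is_cycle_def k_def)
  have s0mem: "\<sigma>!0 \<in> set \<sigma>" using k0 by (simp add: k_def)
  have "set \<sigma> \<subseteq> {0..<2^n}" using cyc by (simp add: is_cycle_def)
  then have "\<sigma>!0 \<in> {0..<2^n}" using s0mem by blast
  then have s0r: "0 \<le> \<sigma>!0 \<and> \<sigma>!0 < 2^n" by simp
  define y0 :: z2 where "y0 = of_int (\<sigma>!0)"
  have y0n: "red n y0 = \<sigma>!0" using s0r by (simp add: y0_def red_of_int)
  have y0s: "red (Suc n) y0 = \<sigma>!0"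
  proof -
    have "(2::int)^n < 2^Suc n" by simp
    then show ?thesis using s0r by (simp add: y0_def red_of_int)
  qed
  have p_red: "p j = red (Suc n) ((poly f ^^ j) y0)" for j
    by (simp add: p_def red_funpow y0s)
  have p_range: "0 \<le> p j \<and> p j < 2^Suc n" for j
    unfolding p_red using red_range[of "Suc n"] by blast
  have p_mod: "p j mod 2^n = \<sigma>!(j mod k)" for j
  proof -
    have "p j mod 2^n = red n ((poly f ^^ j) y0)" by (simp add: p_red red_le)
    also have "\<dots> = (fn_map f n ^^ j) (\<sigma>!0)" by (simp add: red_funpow y0n)
    also have "\<dots> = \<sigma>!(j mod k)" using cyc_orbit[OF cyc] by (simp add: k_def)
    finally show ?thesis .
  qed
  have p_mem: "p j mod 2^n \<in> set \<sigma>" for j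
    using p_mod[of j] k0 by (simp add: k_def)
  have p_add: "(fn_map f (Suc n) ^^ i) (p j) = p (i + j)" for i j
    by (simp add: p_def funpow_add)
  have p_Suc: "fn_map f (Suc n) (p j) = p (Suc j)" for j
    using p_add[of 1 j] by simp
  have shift: "(fn_map f (Suc n) ^^ k) t \<noteq> t" if t: "0 \<le> t" "t < 2^Suc n" "t mod 2^n \<in> set \<sigma>" for t
  proof
    assume eq: "(fn_map f (Suc n) ^^ k) t = t"
    define x :: z2 where "x = of_int t"
    have xs: "red (Suc n) x = t" using t by (simp add: x_def red_of_int)
    have xn: "red n x \<in> set \<sigma>" using t(3) xs red_le[of n "Suc n" x] by simp
    obtain w where w: "poly G x - x = 2^n * w"
      using G_cong[OF cyc xn] by (auto simp: dvd_def G_def k_def)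
    have bw: "b_val f n k x = w" using w by (simp add: G_def b_val_eq)
    have nw: "\<not> 2 dvd w" using H[OF xn] bw by (simp add: k_def)
    have "red (Suc n) (poly G x) = (fn_map f (Suc n) ^^ k) t"
      by (simp add: G_def poly_iter red_funpow xs)
    then have "red (Suc n) (poly G x) = red (Suc n) x" using eq xs by simp
    then have "(2::z2)^Suc n dvd poly G x - x" by (simp only: red_eq_iff)
    then obtain q where "poly G x - x = 2^Suc n * q" by (auto simp: dvd_def)
    then have "(2::z2)^n * w = 2^n * (2 * q)" using w by (simp add: algebra_simps)
    then have "w = 2 * q" by (rule cancel2)
    then show False using nw by simp
  qed
  have period: "p (2*k) = \<sigma>!0"
  proof -
    have xn: "red n y0 \<in> set \<sigma>" using y0n s0mem by simp
    obtain w where w: "poly G y0 - y0 = 2^n * w"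
      using G_cong[OF cyc xn] by (auto simp: dvd_def G_def k_def)
    have "\<not> 2 dvd a_val f k y0" using H[OF xn] by (simp add: k_def)
    then have "\<not> 2 dvd poly (pderiv G) y0" by (simp add: a_val_def deriv_at_eq G_def)
    then obtain v where v: "poly (pderiv G) y0 = 1 + 2 * v" using odd_z2 by blast
    obtain c where c: "poly (pcompose G G) y0 - y0 = 2^n * w * (1 + poly (pderiv G) y0) + 2^(2*n) * w^2 * c"
      using step_calc(1)[OF n w] by blast
    have e2: "(2::z2)^(2*n) = 2^Suc n * 2^(n - 1)"
    proof -
      have "2*n = Suc n + (n - 1)" using n by simp
      then show ?thesis by (simp only: power_add)
    qed
    have "poly (pcompose G G) y0 - y0 = 2^Suc n * (w * (1 + v) + 2^(n-1) * w^2 * c)"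
      unfolding c v e2 by (simp add: algebra_simps)
    then have "(2::z2)^Suc n dvd poly (pcompose G G) y0 - y0" by simp
    then have "red (Suc n) (poly (pcompose G G) y0) = red (Suc n) y0" by (simp only: red_eq_iff)
    moreover have "pcompose G G = iter_poly f (2*k)" by (simp add: G_def iter_poly_add mult_2)
    ultimately show ?thesis by (simp add: p_red poly_iter y0s)
  qed
  have p_per: "p (j + 2*k) = p j" for j
    using p_add[of j "2*k"] period by (simp add: p_def)
  have p_per2: "p (j + q * (2*k)) = p j" for j q
  proof (induct q)
    case 0 then show ?case by simp
  next
    case (Suc q)
    have "p (j + Suc q * (2*k)) = p (j + q * (2*k) + 2*k)" by (simp add: algebra_simps)
    also have "\<dots> = p j" using p_per Suc by simp
    finally show ?case .
  qed
  have p_modk: "p j = p (j mod (2*k))" for j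
    using p_per2[of "j mod (2*k)" "j div (2*k)"] mod_div_mult_eq[of j "2*k"] by simp
  have p_lt: "p i \<noteq> p j" if "i < j" "j < 2*k" for i j
  proof (cases "i mod k = j mod k")
    case True
    then have "j = i + k" using mod_eq_shift that by blast
    then have "p j = (fn_map f (Suc n) ^^ k) (p i)" using p_add by (simp add: add.commute)
    moreover have "(fn_map f (Suc n) ^^ k) (p i) \<noteq> p i" using shift p_range p_mem by blast
    ultimately show ?thesis by simp
  next
    case False
    have "\<sigma>!(i mod k) \<noteq> \<sigma>!(j mod k)"
      using False cyc k0 by (simp add: is_cycle_def k_def nth_eq_iff_index_eq)
    then show ?thesis using p_mod[of i] p_mod[of j] by metis
  qed
  have dist: "distinct \<tau>"
    unfolding \<tau>_def distinct_conv_nth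
  proof (intro allI impI)
    fix i j assume "i < length (map p [0..<2*k])" "j < length (map p [0..<2*k])" "i \<noteq> j"
    then show "map p [0..<2*k] ! i \<noteq> map p [0..<2*k] ! j"
      using p_lt[of i j] p_lt[of j i] by (cases "i < j") auto
  qed
  have tau_cyc: "is_cycle f (Suc n) \<tau>"
    unfolding is_cycle_def
  proof (intro conjI allI impI)
    show "\<tau> \<noteq> []" using k0 by (simp add: \<tau>_def)
    show "distinct \<tau>" by (rule dist)
    show "set \<tau> \<subseteq> {0..<2 ^ Suc n}" using p_range by (auto simp: \<tau>_def)
    fix i assume i: "i < length \<tau>"
    then have "i < 2*k" by (simp add: \<tau>_def)
    then have "fn_map f (Suc n) (\<tau> ! i) = p (Suc i)" by (simp add: \<tau>_def p_Suc)
    also have "\<dots> = p ((i + 1) mod (2*k))" using p_modk by simp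
    also have "\<dots> = \<tau> ! ((i + 1) mod length \<tau>)" using k0 by (simp add: \<tau>_def)
    finally show "fn_map f (Suc n) (\<tau> ! i) = \<tau> ! ((i + 1) mod length \<tau>)" .
  qed
  have tau_lift: "is_lift f n \<sigma> \<tau>"
    unfolding is_lift_def using tau_cyc p_mem by (auto simp: \<tau>_def)
  have pre: "y \<in> set \<tau>" if y: "0 \<le> y" "y < 2^Suc n" "y mod 2^n \<in> set \<sigma>" for y
  proof -
    obtain i where i: "i < k" "y mod 2^n = \<sigma>!i" using y(3) by (auto simp: in_set_conv_nth k_def)
    have a: "p i mod 2^n = \<sigma>!i" using p_mod[of i] i by simp
    have b: "p (i + k) mod 2^n = \<sigma>!i" using p_mod[of "i+k"] i by simp
    have ne: "p i \<noteq> p (i + k)" using p_lt[of i "i+k"] i k0 by simp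
    have "y = p i \<or> y = p (i + k)"
      using three_vals[of "2^n" y "p i" "p (i+k)"] y p_range[of i] p_range[of "i+k"] a b i ne by simp
    then show ?thesis using i by (auto simp: \<tau>_def)
  qed
  have uniq: "set \<tau>' = set \<tau>" if l: "is_lift f n \<sigma> \<tau>'" for \<tau>'
  proof
    have c': "is_cycle f (Suc n) \<tau>'" using l by (simp add: is_lift_def)
    show sub: "set \<tau>' \<subseteq> set \<tau>"
    proof
      fix y assume "y \<in> set \<tau>'"
      then show "y \<in> set \<tau>" using l pre by (auto simp: is_lift_def is_cycle_def)
    qed
    have "\<tau>' \<noteq> []" using c' by (simp add: is_cycle_def)
    then have y0': "\<tau>'!0 \<in> set \<tau>'" by simp
    then have "\<tau>'!0 \<in> set \<tau>" using sub by blast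
    then obtain i where i: "i < 2*k" "\<tau>'!0 = p i" by (auto simp: \<tau>_def)
    have orb: "p (j + i) \<in> set \<tau>'" for j
    proof (induct j)
      case 0 then show ?case using y0' i by simp
    next
      case (Suc j)
      then have "fn_map f (Suc n) (p (j + i)) \<in> set \<tau>'" by (rule cyc_closed[OF c'])
      then show ?case by (simp add: p_Suc)
    qed
    show "set \<tau> \<subseteq> set \<tau>'"
    proof
      fix z assume "z \<in> set \<tau>"
      then obtain m where m: "m < 2*k" "z = p m" by (auto simp: \<tau>_def)
      have "p ((m + 2*k - i) + i) = p (m + 2*k)" using i by simp
      also have "\<dots> = p m" by (rule p_per)
      finally show "z \<in> set \<tau>'" using orb[of "m + 2*k - i"] m by simp
    qed
  qed
  show ?thesis using tau_lift uniq by (simp add: \<tau>_def p_def k_def)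
qed



lemma grow_calc:
  assumes cyc: "is_cycle f n \<sigma>" and n: "n \<ge> 2" and xn: "red n x \<in> set \<sigma>"
    and nb: "\<not> (2::z2) dvd b_val f n (length \<sigma>) x"
  shows "4 dvd a_val f (length \<sigma>) x - 1 \<Longrightarrow>
           4 dvd a_val f (2 * length \<sigma>) x - 1 \<and> \<not> 2 dvd b_val f (Suc n) (2 * length \<sigma>) x"
    and "4 dvd a_val f (length \<sigma>) x - 3 \<Longrightarrow>
           4 dvd a_val f (2 * length \<sigma>) x - 1 \<and> 2 dvd b_val f (Suc n) (2 * length \<sigma>) x"
proof -
  define k where "k = length \<sigma>"
  define G where "G = iter_poly f k"
  obtain m where m: "n = Suc (Suc m)" using n by (metis add_2_eq_Suc le_Suc_ex)
  obtain w where w: "poly G x - x = 2^n * w"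
    using G_cong[OF cyc xn] by (auto simp: dvd_def G_def k_def)
  have bw: "b_val f n k x = w" using w by (simp add: G_def b_val_eq)
  have nw: "\<not> 2 dvd w" using nb bw by (simp add: k_def)
  define A where "A = poly (pderiv G) x"
  have aA: "a_val f k x = A" by (simp add: a_val_def deriv_at_eq G_def A_def)
  obtain c where c: "poly (pcompose G G) x - x = 2^n * w * (1 + A) + 2^(2*n) * w^2 * c"
    using step_calc(1)[OF n w] by (auto simp: A_def)
  obtain t where t: "poly (pderiv G) (poly G x) = A + 4 * t"
    using step_calc(2)[OF n w] by (auto simp: A_def dvd_def algebra_simps)
  have GG: "iter_poly f (2*k) = pcompose G G" by (simp add: G_def iter_poly_add mult_2)
  have a2: "a_val f (2*k) x = (A + 4 * t) * A"
    by (simp add: a_val_def deriv_at_eq GG pderiv_pcompose poly_pcompose t A_def)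
  have e2: "(2::z2)^(2*n) = 2^Suc n * (2 * 2^m)"
  proof -
    have "2*n = Suc n + Suc m" using m by simp
    then show ?thesis by (simp only: power_add power_Suc)
  qed
  have pn: "(2::z2)^n * 2 = 2^Suc n" by simp
  have bval2: "b_val f (Suc n) (2*k) x = B" if "poly (pcompose G G) x - x = 2^Suc n * B" for B
    using that by (simp add: GG b_val_eq)
  show "4 dvd a_val f (length \<sigma>) x - 1 \<Longrightarrow>
           4 dvd a_val f (2 * length \<sigma>) x - 1 \<and> \<not> 2 dvd b_val f (Suc n) (2 * length \<sigma>) x"
  proof -
    assume "4 dvd a_val f (length \<sigma>) x - 1"
    then obtain u where u: "A - 1 = 4 * u" using aA by (auto simp: dvd_def k_def)
    then have Au: "A = 1 + 4 * u" by (simp add: algebra_simps)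
    have "poly (pcompose G G) x - x = 2^Suc n * (w * (1 + 2 * u) + 2 * (2^m * w^2 * c))"
      unfolding c e2 Au pn[symmetric] by (simp add: algebra_simps)
    then have b2: "b_val f (Suc n) (2*k) x = w * (1 + 2 * u) + 2 * (2^m * w^2 * c)" by (rule bval2)
    have "\<not> (2::z2) dvd 1 + 2 * u" using odd_plus_even not_two_dvd_one by blast
    then have "\<not> 2 dvd w * (1 + 2 * u)" using odd_mult_z2 nw by blast
    then have nb2: "\<not> 2 dvd b_val f (Suc n) (2*k) x" unfolding b2 by (rule odd_plus_even)
    have "a_val f (2*k) x - 1 = 4 * (2 * u + 4 * u^2 + t + 4 * t * u)"
      unfolding a2 Au by (simp add: algebra_simps power2_eq_square)
    then have "4 dvd a_val f (2*k) x - 1" by (simp only: dvd_triv_left)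
    with nb2 show ?thesis by (simp add: k_def)
  qed
  show "4 dvd a_val f (length \<sigma>) x - 3 \<Longrightarrow>
           4 dvd a_val f (2 * length \<sigma>) x - 1 \<and> 2 dvd b_val f (Suc n) (2 * length \<sigma>) x"
  proof -
    assume "4 dvd a_val f (length \<sigma>) x - 3"
    then obtain u where u: "A - 3 = 4 * u" using aA by (auto simp: dvd_def k_def)
    then have Au: "A = 3 + 4 * u" by (simp add: algebra_simps)
    have "poly (pcompose G G) x - x = 2^Suc n * (2 * (w * (1 + u) + 2^m * w^2 * c))"
      unfolding c e2 Au pn[symmetric] by (simp add: algebra_simps)
    then have b2: "b_val f (Suc n) (2*k) x = 2 * (w * (1 + u) + 2^m * w^2 * c)"
      by (rule bval2)
    have "a_val f (2*k) x - 1 = 4 * (2 + 6 * u + 4 * u^2 + 3 * t + 4 * t * u)"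
      unfolding a2 Au by (simp add: algebra_simps power2_eq_square)
    then have "4 dvd a_val f (2*k) x - 1" by (simp only: dvd_triv_left)
    with b2 show ?thesis by (simp add: k_def)
  qed
qed



lemma odd_of_4: "(4::z2) dvd a - c \<Longrightarrow> \<not> 2 dvd c \<Longrightarrow> \<not> 2 dvd a"
proof
  assume h: "(4::z2) dvd a - c" "\<not> 2 dvd c" "2 dvd a"
  have "(2::z2) dvd 2 * 2" by (rule dvd_triv_left)
  then have "(2::z2) dvd 4" by simp
  then have "(2::z2) dvd a - c" using h(1) dvd_trans by blast
  then have "(2::z2) dvd a - (a - c)" using h(3) dvd_diff by blast
  moreover have "a - (a - c) = c" by (simp only: diff_diff_eq2 add_diff_cancel_left')
  ultimately show False using h(2) by (simp only:)
qed

lemma three_odd: "\<not> (2::z2) dvd 3"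
proof
  assume "(2::z2) dvd 3"
  moreover have "(3::z2) = 1 + 2 * 1" by simp
  ultimately have "(2::z2) dvd 1 + 2 * 1" by (simp only:)
  then show False using odd_plus_even not_two_dvd_one by blast
qed

theorem proposition3p1:
  fixes f :: "z2 poly" and n :: nat and \<sigma> :: "int list"
  assumes "n \<ge> 2" and "is_cycle f n \<sigma>"
  shows "(strongly_grows f n \<sigma> \<longrightarrow>
           (\<exists>\<tau>. is_lift f n \<sigma> \<tau> \<and> (\<forall>\<tau>'. is_lift f n \<sigma> \<tau>' \<longrightarrow> set \<tau>' = set \<tau>)
                \<and> strongly_grows f (Suc n) \<tau>))
       \<and> (weakly_grows f n \<sigma> \<longrightarrow>
           (\<exists>\<tau>. is_lift f n \<sigma> \<tau> \<and> (\<forall>\<tau>'. is_lift f n \<sigma> \<tau>' \<longrightarrow> set \<tau>' = set \<tau>)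
                \<and> strongly_splits f (Suc n) \<tau>))"
proof -
  define \<tau> where "\<tau> = map (\<lambda>j. (fn_map f (Suc n) ^^ j) (\<sigma>!0)) [0..<2 * length \<sigma>]"
  have len: "length \<tau> = 2 * length \<sigma>" by (simp add: \<tau>_def)
  have down: "red n x \<in> set \<sigma>" if "is_lift f n \<sigma> \<tau>" "red (Suc n) x \<in> set \<tau>" for x
  proof -
    have "red (Suc n) x mod 2^n \<in> set \<sigma>" using that by (simp add: is_lift_def)
    then show ?thesis by (simp add: red_le)
  qed
  show ?thesis
  proof (intro conjI impI)
    assume sg: "strongly_grows f n \<sigma>"
    have H: "\<not> (2::z2) dvd b_val f n (length \<sigma>) x \<and> \<not> (2::z2) dvd a_val f (length \<sigma>) x"
      if "red n x \<in> set \<sigma>" for x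
    proof -
      have "4 dvd a_val f (length \<sigma>) x - 1" "\<not> (2::z2) dvd b_val f n (length \<sigma>) x"
        using sg that unfolding strongly_grows_def by blast+
      then show ?thesis using odd_of_4[OF _ not_two_dvd_one] by blast
    qed
    have L: "is_lift f n \<sigma> \<tau> \<and> (\<forall>\<tau>'. is_lift f n \<sigma> \<tau>' \<longrightarrow> set \<tau>' = set \<tau>)"
      unfolding \<tau>_def using lift_lemma[OF assms(2) H assms(1)] by blast
    have "strongly_grows f (Suc n) \<tau>"
      unfolding strongly_grows_def len
    proof (intro allI impI)
      fix x assume "red (Suc n) x \<in> set \<tau>"
      then have xn: "red n x \<in> set \<sigma>" using down L by blast
      have "\<not> (2::z2) dvd b_val f n (length \<sigma>) x" "4 dvd a_val f (length \<sigma>) x - 1"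
        using sg xn unfolding strongly_grows_def by blast+
      then show "4 dvd a_val f (2 * length \<sigma>) x - 1 \<and> \<not> 2 dvd b_val f (Suc n) (2 * length \<sigma>) x"
        using grow_calc(1)[OF assms(2) assms(1) xn] by blast
    qed
    with L show "\<exists>\<tau>. is_lift f n \<sigma> \<tau> \<and> (\<forall>\<tau>'. is_lift f n \<sigma> \<tau>' \<longrightarrow> set \<tau>' = set \<tau>)
                \<and> strongly_grows f (Suc n) \<tau>" by blast
  next
    assume wg: "weakly_grows f n \<sigma>"
    have H: "\<not> (2::z2) dvd b_val f n (length \<sigma>) x \<and> \<not> (2::z2) dvd a_val f (length \<sigma>) x"
      if "red n x \<in> set \<sigma>" for x
    proof -
      have "4 dvd a_val f (length \<sigma>) x - 3" "\<not> (2::z2) dvd b_val f n (length \<sigma>) x"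
        using wg that unfolding weakly_grows_def by blast+
      then show ?thesis using odd_of_4[OF _ three_odd] by blast
    qed
    have L: "is_lift f n \<sigma> \<tau> \<and> (\<forall>\<tau>'. is_lift f n \<sigma> \<tau>' \<longrightarrow> set \<tau>' = set \<tau>)"
      unfolding \<tau>_def using lift_lemma[OF assms(2) H assms(1)] by blast
    have "strongly_splits f (Suc n) \<tau>"
      unfolding strongly_splits_def len
    proof (intro allI impI)
      fix x assume "red (Suc n) x \<in> set \<tau>"
      then have xn: "red n x \<in> set \<sigma>" using down L by blast
      have "\<not> (2::z2) dvd b_val f n (length \<sigma>) x" "4 dvd a_val f (length \<sigma>) x - 3"
        using wg xn unfolding weakly_grows_def by blast+
      then show "4 dvd a_val f (2 * length \<sigma>) x - 1 \<and> 2 dvd b_val f (Suc n) (2 * length \<sigma>) x"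
        using grow_calc(2)[OF assms(2) assms(1) xn] by blast
    qed
    with L show "\<exists>\<tau>. is_lift f n \<sigma> \<tau> \<and> (\<forall>\<tau>'. is_lift f n \<sigma> \<tau>' \<longrightarrow> set \<tau>' = set \<tau>)
                \<and> strongly_splits f (Suc n) \<tau>" by blast
  qed
qed

end
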